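(* Let $T(u)=\exp\big(u\,\mathrm{diag}\big(\begin{psmallmatrix}0&1\\1&0\end{psmallmatrix},\begin{psmallmatrix}0&1\\-1&0\end{psmallmatrix},0\big)\big)\in SO^+(1,4)$ and let $\xi_i=T(u)E_i$. Consider Willmore surfaces (with dual surfaces) invariant under $T$, with initial curve $Y(u)=T(u)(a,0,b,0,c)^t$, $a=\cos\theta$, $b=\sin\theta$, $c=\sqrt{\cos2\theta}$, $0\le\theta\le\pi/4$, and invariant frame along it given in the basis $\xi_i$ by $\psi=(0,-b^2q,-\frac ca\sqrt{1-b^2q^2},abq,\frac ba\sqrt{1-b^2q^2})+hY$, $P_1=(0,a,0,b,0)+mY$, $P_2=(-cq,-b\sqrt{1-b^2q^2},0,a\sqrt{1-b^2q^2},-aq)+pY$ with real constants $h,m,q,p$, $|q|\le1/|b|$, and $\hat Y$ the null vector orthogonal to $P_1,P_2,\psi,\psi'$ with $\langle\hat Y,Y\rangle=-1$. Then all such surfaces are obtained as follows: (i) If $c\ne0$, then $p=\frac{amh+a^2q-bcm\sqrt{1-b^2q^2}}{ac}$ and the Björling data are $(\mu_1,\mu_2,k_1,k_2)=\big(m,\ acq-p,\ \frac{bc\sqrt{1-b^2q^2}}{2a}-\frac h2,\ -\frac c2\big)$, $\rho_1=\frac{a^2h^2-2abch\sqrt{1-q^2b^2}+a^2p^2+c^4q^2-2a^3cpq-a^2m^2+c^2}{2a^2}$, $\rho_2=\frac{a^2cmq-ach-amp-b\sqrt{1-q^2b^2}}{a}$, with $0\le\theta<\pi/4$, $|q|\le1/|\sin\theta|$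 and $m,q,h$ arbitrary. (ii) If $c=0$, the Björling data are $(\mu_1,\mu_2,k_1,k_2,\rho_1,\rho_2)=\big(m,-p,-\frac h2,0,\frac{h^2+p^2-m^2}2,-pm-\sqrt{1-h^2m^2}\big)$ with $h,m,p\in\mathbb R$ arbitrary subject to $|hm|\le1$.
   Context: $\mathbb R^5_1$ is $\mathbb R^5$ with $\langle x,y\rangle=-x_0y_0+\sum_{j=1}^4x_jy_j$ and standard basis $E_0,\dots,E_4$; surfaces are $y=[Y]$ with $Y$ in the forward light cone. For a Willmore surface with canonical lift $Y$ w.r.t. $z=u+iv$ ($\langle Y_z,Y_z\rangle=0,\langle Y_z,Y_{\bar z}\rangle=\frac12$), conformal Gauss map $\psi$ (unit spacelike, orthogonal to $Y,Y_z,Y_{\bar z},Y_{z\bar z}$) and dual surface $[\hat Y]$ (second envelope of $\psi$: $\langle\hat Y,\psi\rangle=\langle\hat Y,\psi_z\rangle=0$, $\langle Y,\hat Y\rangle=-1$), with unit vector fields $P_1,P_2$ along $v=0$ satisfying $P_1\equiv Y_u\bmod Y$, $P_1\perp\hat Y$, $P_2\perp\{\psi,Y,\hat Y,P_1\}$, the Björling data are the real functions with $Y_u=-\mu_1Y+P_1$, $\hat Y_u=\mu_1\hat Y+\rho_1P_1+\rho_2P_2$, $P_{1u}=\mu_2P_2+2k_1\psi+\hat Y+\rho_1Y$, $P_{2u}=-\mu_2P_1-2k_2\psi+\rho_2Y$, $\psi_u=-2k_1P_1+2k_2P_2$. The constraint $\langle\hat Y,\psi'\rangle=0$ is equivalent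 to $amh+a^2q-bcm\sqrt{1-b^2q^2}-acp=0$. *)

theory Defs
  imports "HOL-Analysis.Analysis"
begin

definition vec5 :: "real \<Rightarrow> real \<Rightarrow> real \<Rightarrow> real \<Rightarrow> real \<Rightarrow> real^5" where
  "vec5 x0 x1 x2 x3 x4 =
     (\<chi> i. if i = 0 then x0 else if i = 1 then x1 else if i = 2 then x2
           else if i = 3 then x3 else x4)"

definition lor :: "real^5 \<Rightarrow> real^5 \<Rightarrow> real" where
  "lor x y = - (x$0 * y$0) + x$1 * y$1 + x$2 * y$2 + x$3 * y$3 + x$4 * y$4"

text \<open>The one-parameter group T(u) = exp(u G), G = diag(A, B, 0),
  A = [[0,1],[1,0]], B the 2x2 rotation generator,
  written out entrywise.\<close>

definition Tmat :: "real \<Rightarrow> real^5^5" where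
  "Tmat u = (\<chi> i j.
      if i = 0 \<and> j = 0 then cosh u else if i = 0 \<and> j = 1 then sinh u
      else if i = 1 \<and> j = 0 then sinh u else if i = 1 \<and> j = 1 then cosh u
      else if i = 2 \<and> j = 2 then cos u else if i = 2 \<and> j = 3 then - sin u
      else if i = 3 \<and> j = 2 then sin u else if i = 3 \<and> j = 3 then cos u
      else if i = 4 \<and> j = 4 then 1 else 0)"

text \<open>Coordinates w.r.t. the moving basis xi_i = T(u) E_i.\<close>
definition inXi :: "real \<Rightarrow> real^5 \<Rightarrow> real^5" where
  "inXi u v = Tmat u *v v"

definition ca :: "real \<Rightarrow> real" where "ca \<theta> = cos \<theta>"
definition cb :: "real \<Rightarrow> real" where "cb \<theta> = sin \<theta>"
definition cc :: "real \<Rightarrow> real" where "cc \<theta> = sqrt (cos (2 * \<theta>))"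
definition sq :: "real \<Rightarrow> real \<Rightarrow> real" where
  "sq \<theta> q = sqrt (1 - (sin \<theta>)^2 * q^2)"

definition Ycurve :: "real \<Rightarrow> real \<Rightarrow> real^5" where
  "Ycurve \<theta> u = inXi u (vec5 (ca \<theta>) 0 (cb \<theta>) 0 (cc \<theta>))"

definition psiF :: "real \<Rightarrow> real \<Rightarrow> real \<Rightarrow> real \<Rightarrow> real^5" where
  "psiF \<theta> h q u =
     inXi u (vec5 0 (- ((cb \<theta>)^2) * q) (- (cc \<theta> / ca \<theta>) * sq \<theta> q)
                  (ca \<theta> * cb \<theta> * q) ((cb \<theta> / ca \<theta>) * sq \<theta> q))
     + h *\<^sub>R Ycurve \<theta> u"

definition P1F :: "real \<Rightarrow> real \<Rightarrow> real \<Rightarrow> real^5" where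
  "P1F \<theta> m u = inXi u (vec5 0 (ca \<theta>) 0 (cb \<theta>) 0) + m *\<^sub>R Ycurve \<theta> u"

definition P2F :: "real \<Rightarrow> real \<Rightarrow> real \<Rightarrow> real \<Rightarrow> real^5" where
  "P2F \<theta> q p u =
     inXi u (vec5 (- (cc \<theta>) * q) (- (cb \<theta>) * sq \<theta> q) 0 (ca \<theta> * sq \<theta> q) (- (ca \<theta>) * q))
     + p *\<^sub>R Ycurve \<theta> u"

text \<open>All conditions on the dual curve Yhat along the initial curve and the
  Bjoerling data (mu1, mu2, k1, k2, rho1, rho2), as functions of u.\<close>
definition admissible ::
  "real \<Rightarrow> real \<Rightarrow> real \<Rightarrow> real \<Rightarrow> real \<Rightarrow> (real \<Rightarrow> real^5)
   \<Rightarrow> (real \<Rightarrow> real) \<Rightarrow> (real \<Rightarrow> real) \<Rightarrow> (real \<Rightarrow> real) \<Rightarrow> (real \<Rightarrow> real)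
   \<Rightarrow> (real \<Rightarrow> real) \<Rightarrow> (real \<Rightarrow> real) \<Rightarrow> bool" where
  "admissible \<theta> h m q p Yh \<mu>1 \<mu>2 k1 k2 \<rho>1 \<rho>2 \<longleftrightarrow>
     (\<forall>u.
        lor (Yh u) (Yh u) = 0 \<and>
        lor (Yh u) (P1F \<theta> m u) = 0 \<and>
        lor (Yh u) (P2F \<theta> q p u) = 0 \<and>
        lor (Yh u) (psiF \<theta> h q u) = 0 \<and>
        lor (Yh u) (vector_derivative (psiF \<theta> h q) (at u)) = 0 \<and>
        lor (Yh u) (Ycurve \<theta> u) = -1 \<and>
        (Ycurve \<theta> has_vector_derivative
           (- \<mu>1 u *\<^sub>R Ycurve \<theta> u + P1F \<theta> m u)) (at u) \<and>
        (Yh has_vector_derivative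
           (\<mu>1 u *\<^sub>R Yh u + \<rho>1 u *\<^sub>R P1F \<theta> m u + \<rho>2 u *\<^sub>R P2F \<theta> q p u)) (at u) \<and>
        (P1F \<theta> m has_vector_derivative
           (\<mu>2 u *\<^sub>R P2F \<theta> q p u + (2 * k1 u) *\<^sub>R psiF \<theta> h q u + Yh u
            + \<rho>1 u *\<^sub>R Ycurve \<theta> u)) (at u) \<and>
        (P2F \<theta> q p has_vector_derivative
           (- \<mu>2 u *\<^sub>R P1F \<theta> m u - (2 * k2 u) *\<^sub>R psiF \<theta> h q u
            + \<rho>2 u *\<^sub>R Ycurve \<theta> u)) (at u) \<and>
        (psiF \<theta> h q has_vector_derivative
           (- (2 * k1 u) *\<^sub>R P1F \<theta> m u + (2 * k2 u) *\<^sub>R P2F \<theta> q p u)) (at u))"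

end

theory Submission
  imports Defs
begin


lemma exhaust_5: fixes x :: 5 shows "x = 0 \<or> x = 1 \<or> x = 2 \<or> x = 3 \<or> x = 4"
proof (induct x)
  case (of_int z)
  then have "z = 0 \<or> z = 1 \<or> z = 2 \<or> z = 3 \<or> z = 4" by simp presburger
  then show ?case by (elim disjE) simp_all
qed

lemma UNIV_5: "(UNIV::5 set) = {0,1,2,3,4}" using exhaust_5 by auto

lemma forall_5: "(\<forall>i::5. P i) \<longleftrightarrow> P 0 \<and> P 1 \<and> P 2 \<and> P 3 \<and> P 4"
  apply (rule iffI)
   apply simp
  apply clarify
  subgoal for i using exhaust_5[of i] by auto
  done

lemma vec5_nth [simp]: "vec5 x0 x1 x2 x3 x4 $ 0 = x0" "vec5 x0 x1 x2 x3 x4 $ 1 = x1"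
  "vec5 x0 x1 x2 x3 x4 $ 2 = x2" "vec5 x0 x1 x2 x3 x4 $ 3 = x3" "vec5 x0 x1 x2 x3 x4 $ 4 = x4"
  by (simp_all add: vec5_def)

lemma vec5_eta: "v = vec5 (v$0) (v$1) (v$2) (v$3) (v$4)"
  unfolding vec_eq_iff forall_5 by simp

lemma vec5_eq_iff: "vec5 x0 x1 x2 x3 x4 = vec5 y0 y1 y2 y3 y4 \<longleftrightarrow> x0=y0 \<and> x1=y1 \<and> x2=y2 \<and> x3=y3 \<and> x4=y4"
  unfolding vec_eq_iff forall_5 by simp

lemma vec5_add [simp]: "vec5 x0 x1 x2 x3 x4 + vec5 y0 y1 y2 y3 y4 = vec5 (x0+y0) (x1+y1) (x2+y2) (x3+y3) (x4+y4)"
  unfolding vec_eq_iff forall_5 by simp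
lemma vec5_diff [simp]: "vec5 x0 x1 x2 x3 x4 - vec5 y0 y1 y2 y3 y4 = vec5 (x0-y0) (x1-y1) (x2-y2) (x3-y3) (x4-y4)"
  unfolding vec_eq_iff forall_5 by simp
lemma vec5_scale [simp]: "r *\<^sub>R vec5 x0 x1 x2 x3 x4 = vec5 (r*x0) (r*x1) (r*x2) (r*x3) (r*x4)"
  unfolding vec_eq_iff forall_5 by simp
lemma vec5_uminus [simp]: "- vec5 x0 x1 x2 x3 x4 = vec5 (-x0) (-x1) (-x2) (-x3) (-x4)"
  unfolding vec_eq_iff forall_5 by simp

lemma lor_vec5 [simp]: "lor (vec5 x0 x1 x2 x3 x4) (vec5 y0 y1 y2 y3 y4) = - (x0*y0) + x1*y1 + x2*y2 + x3*y3 + x4*y4"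
  by (simp add: lor_def)

lemma sum_5: "sum f (UNIV::5 set) = f 0 + f 1 + f 2 + f 3 + f 4"
  unfolding UNIV_5 by (simp add: add.assoc)

lemma Tmat_comp: "Tmat u *v x = vec5 (cosh u*x$0 + sinh u*x$1) (sinh u*x$0+cosh u*x$1) (cos u*x$2 - sin u*x$3) (sin u*x$2 + cos u*x$3) (x$4)"
  unfolding vec_eq_iff forall_5 vec5_nth
  unfolding matrix_vector_mult_def sum_5 by (simp add: Tmat_def)

lemma Tmat_vec5: "Tmat u *v vec5 x0 x1 x2 x3 x4 = vec5 (cosh u*x0 + sinh u*x1) (sinh u*x0+cosh u*x1) (cos u*x2 - sin u*x3) (sin u*x2 + cos u*x3) x4"
  unfolding Tmat_comp vec5_nth ..

definition Gv :: "real^5 \<Rightarrow> real^5" where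
  "Gv v = vec5 (v$1) (v$0) (- v$3) (v$2) 0"

lemma Gv_vec5 [simp]: "Gv (vec5 x0 x1 x2 x3 x4) = vec5 x1 x0 (-x3) x2 0"
  by (simp add: Gv_def)

lemma vec5_decomp: "vec5 x0 x1 x2 x3 x4 = x0 *\<^sub>R vec5 1 0 0 0 0 + x1 *\<^sub>R vec5 0 1 0 0 0
   + x2 *\<^sub>R vec5 0 0 1 0 0 + x3 *\<^sub>R vec5 0 0 0 1 0 + x4 *\<^sub>R vec5 0 0 0 0 1"
  by simp

lemma T_deriv: "((\<lambda>u. Tmat u *v v) has_vector_derivative (Tmat u *v Gv v)) (at u)"
proof -
  obtain x0 x1 x2 x3 x4 where v: "v = vec5 x0 x1 x2 x3 x4" using vec5_eta by blast
  have "((\<lambda>u. vec5 (cosh u*x0 + sinh u*x1) (sinh u*x0+cosh u*x1) (cos u*x2 - sin u*x3) (sin u*x2 + cos u*x3) x4)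
     has_vector_derivative vec5 (sinh u*x0 + cosh u*x1) (cosh u*x0+sinh u*x1) (-sin u*x2 - cos u*x3) (cos u*x2 - sin u*x3) 0) (at u)"
    apply (subst vec5_decomp) apply (subst (2) vec5_decomp[of _ _ _ _ 0]) 
    apply (rule derivative_eq_intros refl | simp)+
    done
  moreover have "Tmat u *v Gv v = vec5 (sinh u*x0 + cosh u*x1) (cosh u*x0+sinh u*x1) (-sin u*x2 - cos u*x3) (cos u*x2 - sin u*x3) 0"
    unfolding v Gv_vec5 Tmat_vec5 vec5_eq_iff by (simp add: algebra_simps)
  moreover have "(\<lambda>u. Tmat u *v v) = (\<lambda>u. vec5 (cosh u*x0 + sinh u*x1) (sinh u*x0+cosh u*x1) (cos u*x2 - sin u*x3) (sin u*x2 + cos u*x3) x4)"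
    unfolding v Tmat_vec5 by simp
  ultimately show ?thesis by simp
qed

lemma e1: "\<And>C S x0 x1 y0 y1::real. -((C*x0+S*x1)*(C*y0+S*y1)) + (S*x0+C*x1)*(S*y0+C*y1) = (C^2-S^2)*(-(x0*y0)+x1*y1)"
    by (simp add: algebra_simps power2_eq_square)
lemma e2: "\<And>C S x2 x3 y2 y3::real. (C*x2-S*x3)*(C*y2-S*y3) + (S*x2+C*x3)*(S*y2+C*y3) = (S^2+C^2)*(x2*y2+x3*y3)"
    by (simp add: algebra_simps power2_eq_square)

lemma lor_T [simp]: "lor (Tmat u *v x) (Tmat u *v y) = lor x y"
proof -
  have c: "(cosh u)^2 - (sinh u)^2 = 1" by (simp only: cosh_square_eq)
  have s: "(sin u)^2 + (cos u)^2 = 1" by (rule sin_cos_squared_add)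
  have "lor (Tmat u *v x) (Tmat u *v y) = 
     (-((cosh u*x$0+sinh u*x$1)*(cosh u*y$0+sinh u*y$1)) + (sinh u*x$0+cosh u*x$1)*(sinh u*y$0+cosh u*y$1))
    + ((cos u*x$2-sin u*x$3)*(cos u*y$2-sin u*y$3) + (sin u*x$2+cos u*x$3)*(sin u*y$2+cos u*y$3)) + x$4*y$4"
    unfolding Tmat_comp lor_vec5 by (simp only: add.assoc)
  also have "\<dots> = lor x y" unfolding e1 e2 c s lor_def by (simp only: mult_1_left)
  finally show ?thesis .
qed



lemma lor_sym: "lor x y = lor y x" by (simp add: lor_def algebra_simps)
lemma lor_add_left [simp]: "lor (x + y) z = lor x z + lor y z" by (simp add: lor_def algebra_simps)
lemma lor_add_right [simp]: "lor z (x + y) = lor z x + lor z y" by (simp add: lor_def algebra_simps)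
lemma lor_diff_left [simp]: "lor (x - y) z = lor x z - lor y z" by (simp add: lor_def algebra_simps)
lemma lor_diff_right [simp]: "lor z (x - y) = lor z x - lor z y" by (simp add: lor_def algebra_simps)
lemma lor_scale_left [simp]: "lor (r *\<^sub>R x) z = r * lor x z" by (simp add: lor_def algebra_simps)
lemma lor_scale_right [simp]: "lor z (r *\<^sub>R x) = r * lor z x" by (simp add: lor_def algebra_simps)
lemma lor_minus_left [simp]: "lor (- x) z = - lor x z" by (simp add: lor_def algebra_simps)

lemma Gv_add [simp]: "Gv (x + y) = Gv x + Gv y" by (simp add: Gv_def)
lemma Gv_scale [simp]: "Gv (r *\<^sub>R x) = r *\<^sub>R Gv x" by (simp add: Gv_def)
lemma Gv_diff [simp]: "Gv (x - y) = Gv x - Gv y" by (simp add: Gv_def)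

lemma T_add [simp]: "Tmat u *v x + Tmat u *v y = Tmat u *v (x + y)" by (simp add: matrix_vector_right_distrib)
lemma T_diff [simp]: "Tmat u *v x - Tmat u *v y = Tmat u *v (x - y)" by (simp add: matrix_vector_mult_diff_distrib)
lemma T_scale [simp]: "r *\<^sub>R (Tmat u *v x) = Tmat u *v (r *\<^sub>R x)" by (simp add: matrix_vector_mult_scaleR)
lemma T_uminus [simp]: "- (Tmat u *v x) = Tmat u *v (- x)"
  by (metis T_scale scaleR_minus1_left)

lemma T_inv: "Tmat u *v (Tmat (-u) *v x) = x"
proof -
  have c: "(cosh u)^2 = 1 + (sinh u)^2" by (simp add: cosh_square_eq)
  have s: "(cos u)^2 = 1 - (sin u)^2" by (simp add: cos_squared_eq)
  obtain x0 x1 x2 x3 x4 where x: "x = vec5 x0 x1 x2 x3 x4" using vec5_eta by blast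
  show ?thesis
    unfolding x Tmat_vec5 vec5_eq_iff cosh_minus sinh_minus cos_minus sin_minus
    by (intro conjI; ((simp add: algebra_simps; fail) | (insert c s, algebra)))
qed

lemma T_inj: "Tmat u *v x = Tmat u *v y \<Longrightarrow> x = y"
  by (metis T_inv minus_minus)

lemma T_deriv_eq: "Gv x = y \<Longrightarrow> ((\<lambda>u. Tmat u *v x) has_vector_derivative (Tmat u *v y)) (at u)"
  using T_deriv by blast

locale frame =
  fixes a b c s q ia :: real
  assumes ia: "a*ia = 1" and ab: "a^2+b^2=1" and cc: "c^2 = a^2-b^2" and ss: "s^2 = 1 - b^2*q^2"
begin

definition "Y0 = vec5 a 0 b 0 c"
definition "E1 = vec5 0 a 0 b 0"
definition "PS0 = vec5 0 (-(b^2)*q) (-(c*ia) * s) (a*b*q) ((b*ia) * s)"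
definition "P20 = vec5 (-c*q) (-b * s) 0 (a * s) (-a*q)"
definition "RR = vec5 a 0 (-b) 0 (-c)"
definition "R0 = (ia^2/2) *\<^sub>R RR"
definition "YS = R0 - (c*q*ia) *\<^sub>R P20 - ((c*q*ia)^2/2) *\<^sub>R Y0"
definition "w = c^2*ia^2/2 + c^2*q^2 - c^2*q^2*ia^2/2"

lemmas defs = Y0_def E1_def PS0_def P20_def R0_def YS_def

lemma rr1: "lor RR RR = 0"
  unfolding Y0_def E1_def PS0_def P20_def RR_def by (simp only: lor_vec5 vec5_add vec5_diff vec5_scale vec5_uminus; ((simp add: algebra_simps; fail) | algebra | (insert ia ab cc ss, algebra)))
lemma rr2: "lor RR Y0 = -2*a^2"
  unfolding Y0_def E1_def PS0_def P20_def RR_def by (simp only: lor_vec5 vec5_add vec5_diff vec5_scale vec5_uminus; ((simp add: algebra_simps; fail) | algebra | (insert ia ab cc ss, algebra)))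
lemma rr3: "lor RR E1 = 0"
  unfolding Y0_def E1_def PS0_def P20_def RR_def by (simp only: lor_vec5 vec5_add vec5_diff vec5_scale vec5_uminus; ((simp add: algebra_simps; fail) | algebra | (insert ia ab cc ss, algebra)))
lemma rr4: "lor RR PS0 = 0"
  unfolding Y0_def E1_def PS0_def P20_def RR_def by (simp only: lor_vec5 vec5_add vec5_diff vec5_scale vec5_uminus; ((simp add: algebra_simps; fail) | algebra | (insert ia ab cc ss, algebra)))
lemma rr5: "lor RR P20 = 2*a*c*q"
  unfolding Y0_def E1_def PS0_def P20_def RR_def by (simp only: lor_vec5 vec5_add vec5_diff vec5_scale vec5_uminus; ((simp add: algebra_simps; fail) | algebra | (insert ia ab cc ss, algebra)))
lemma g1: "lor Y0 Y0 = 0"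
  unfolding Y0_def E1_def PS0_def P20_def RR_def by (simp only: lor_vec5 vec5_add vec5_diff vec5_scale vec5_uminus; ((simp add: algebra_simps; fail) | algebra | (insert ia ab cc ss, algebra)))
lemma g3: "lor Y0 E1 = 0"
  unfolding Y0_def E1_def PS0_def P20_def RR_def by (simp only: lor_vec5 vec5_add vec5_diff vec5_scale vec5_uminus; ((simp add: algebra_simps; fail) | algebra | (insert ia ab cc ss, algebra)))
lemma g4: "lor Y0 PS0 = 0"
  unfolding Y0_def E1_def PS0_def P20_def RR_def by (simp only: lor_vec5 vec5_add vec5_diff vec5_scale vec5_uminus; ((simp add: algebra_simps; fail) | algebra | (insert ia ab cc ss, algebra)))
lemma g5: "lor Y0 P20 = 0"
  unfolding Y0_def E1_def PS0_def P20_def RR_def by (simp only: lor_vec5 vec5_add vec5_diff vec5_scale vec5_uminus; ((simp add: algebra_simps; fail) | algebra | (insert ia ab cc ss, algebra)))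
lemma g10: "lor E1 E1 = 1"
  unfolding Y0_def E1_def PS0_def P20_def RR_def by (simp only: lor_vec5 vec5_add vec5_diff vec5_scale vec5_uminus; ((simp add: algebra_simps; fail) | algebra | (insert ia ab cc ss, algebra)))
lemma g11: "lor E1 PS0 = 0"
  unfolding Y0_def E1_def PS0_def P20_def RR_def by (simp only: lor_vec5 vec5_add vec5_diff vec5_scale vec5_uminus; ((simp add: algebra_simps; fail) | algebra | (insert ia ab cc ss, algebra)))
lemma g12: "lor E1 P20 = 0"
  unfolding Y0_def E1_def PS0_def P20_def RR_def by (simp only: lor_vec5 vec5_add vec5_diff vec5_scale vec5_uminus; ((simp add: algebra_simps; fail) | algebra | (insert ia ab cc ss, algebra)))
lemma g13: "lor PS0 PS0 = 1"
  unfolding Y0_def E1_def PS0_def P20_def RR_def by (simp only: lor_vec5 vec5_add vec5_diff vec5_scale vec5_uminus; ((simp add: algebra_simps; fail) | algebra | (insert ia ab cc ss, algebra)))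
lemma g14: "lor PS0 P20 = 0"
  unfolding Y0_def E1_def PS0_def P20_def RR_def by (simp only: lor_vec5 vec5_add vec5_diff vec5_scale vec5_uminus; ((simp add: algebra_simps; fail) | algebra | (insert ia ab cc ss, algebra)))
lemma g15: "lor P20 P20 = 1"
  unfolding Y0_def E1_def PS0_def P20_def RR_def by (simp only: lor_vec5 vec5_add vec5_diff vec5_scale vec5_uminus; ((simp add: algebra_simps; fail) | algebra | (insert ia ab cc ss, algebra)))

lemma iasq: "ia^2 * a^2 = 1" using ia by (metis power_mult_distrib mult.commute power_one)
lemma r1: "lor R0 R0 = 0" unfolding R0_def using rr1 by simp
lemma r2: "lor R0 Y0 = -1" unfolding R0_def using rr2 iasq by (simp add: algebra_simps)
lemma r3: "lor R0 E1 = 0" unfolding R0_def using rr3 by simp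
lemma r4: "lor R0 PS0 = 0" unfolding R0_def using rr4 by simp
lemma r5: "lor R0 P20 = c*q*ia"
proof -
  have "ia^2/2 * (2*a*c*q) = c*q*ia*(a*ia)" by (simp add: power2_eq_square algebra_simps)
  then show ?thesis unfolding R0_def using rr5 ia by simp
qed
lemmas base_gram = rr1 rr2 rr3 rr4 rr5 g1 g3 g4 g5 g10 g11 g12 g13 g14 g15 r1 r2 r3 r4 r5
lemmas base_gram_sym = base_gram[THEN trans[OF lor_sym]]

lemma g2: "lor Y0 YS = -1" unfolding YS_def by (simp add: base_gram base_gram_sym)
lemma g6: "lor YS YS = 0" unfolding YS_def by (simp add: base_gram base_gram_sym algebra_simps power2_eq_square)
lemma g7: "lor YS E1 = 0" unfolding YS_def by (simp add: base_gram base_gram_sym)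
lemma g8: "lor YS PS0 = 0" unfolding YS_def by (simp add: base_gram base_gram_sym)
lemma g9: "lor YS P20 = 0" unfolding YS_def by (simp add: base_gram base_gram_sym)

lemma complete: "v = (-lor v YS) *\<^sub>R Y0 + (-lor v Y0) *\<^sub>R YS + lor v E1 *\<^sub>R E1 + lor v PS0 *\<^sub>R PS0 + lor v P20 *\<^sub>R P20"
proof -
  obtain v0 v1 v2 v3 v4 where v: "v = vec5 v0 v1 v2 v3 v4" using vec5_eta by blast
  show ?thesis unfolding v YS_def R0_def Y0_def RR_def E1_def PS0_def P20_def
    apply (simp only: lor_vec5 vec5_add vec5_diff vec5_scale vec5_uminus lor_add_left lor_add_right lor_diff_left lor_diff_right lor_scale_left lor_scale_right vec5_eq_iff)
    apply (intro conjI)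
    using ia ab cc ss by algebra+
qed

lemma GY0: "Gv Y0 = E1"
  unfolding YS_def R0_def Y0_def RR_def E1_def PS0_def P20_def w_def
  apply (simp only: lor_vec5 vec5_add vec5_diff vec5_scale vec5_uminus Gv_vec5 Gv_add Gv_diff Gv_scale vec5_eq_iff)
  by (intro conjI; ((simp add: algebra_simps; fail) | algebra | (insert ia ab cc ss, algebra)))
lemma GYS: "Gv YS = w *\<^sub>R E1 - (q*a) *\<^sub>R PS0 - (b* s *ia) *\<^sub>R P20"
  unfolding YS_def R0_def Y0_def RR_def E1_def PS0_def P20_def w_def
  apply (simp only: lor_vec5 vec5_add vec5_diff vec5_scale vec5_uminus Gv_vec5 Gv_add Gv_diff Gv_scale vec5_eq_iff)
  by (intro conjI; ((simp add: algebra_simps; fail) | algebra | (insert ia ab cc ss, algebra)))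
lemma GE1: "Gv E1 = w *\<^sub>R Y0 + YS + (b*c*ia* s) *\<^sub>R PS0 + (a*c*q) *\<^sub>R P20"
  unfolding YS_def R0_def Y0_def RR_def E1_def PS0_def P20_def w_def
  apply (simp only: lor_vec5 vec5_add vec5_diff vec5_scale vec5_uminus Gv_vec5 Gv_add Gv_diff Gv_scale vec5_eq_iff)
  by (intro conjI; ((simp add: algebra_simps; fail) | algebra | (insert ia ab cc ss, algebra)))
lemma GPS0: "Gv PS0 = (-(q*a)) *\<^sub>R Y0 - (b*c*ia* s) *\<^sub>R E1 - c *\<^sub>R P20"
  unfolding YS_def R0_def Y0_def RR_def E1_def PS0_def P20_def w_def
  apply (simp only: lor_vec5 vec5_add vec5_diff vec5_scale vec5_uminus Gv_vec5 Gv_add Gv_diff Gv_scale vec5_eq_iff)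
  by (intro conjI; ((simp add: algebra_simps; fail) | algebra | (insert ia ab cc ss, algebra)))
lemma GP20: "Gv P20 = (-(b* s *ia)) *\<^sub>R Y0 - (a*c*q) *\<^sub>R E1 + c *\<^sub>R PS0"
  unfolding YS_def R0_def Y0_def RR_def E1_def PS0_def P20_def w_def
  apply (simp only: lor_vec5 vec5_add vec5_diff vec5_scale vec5_uminus Gv_vec5 Gv_add Gv_diff Gv_scale vec5_eq_iff)
  by (intro conjI; ((simp add: algebra_simps; fail) | algebra | (insert ia ab cc ss, algebra)))


lemmas gram = base_gram g2 g6 g7 g8 g9
lemmas gram_sym = gram[THEN trans[OF lor_sym]]

definition "comb k1 k2 k3 k4 k5 = k1 *\<^sub>R Y0 + k2 *\<^sub>R YS + k3 *\<^sub>R E1 + k4 *\<^sub>R PS0 + k5 *\<^sub>R P20"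

lemma lor_comb: "lor (comb k1 k2 k3 k4 k5) (comb l1 l2 l3 l4 l5) = -(k1*l2) - k2*l1 + k3*l3 + k4*l4 + k5*l5"
  unfolding comb_def by (simp add: gram gram_sym algebra_simps)

lemma lor_comb_base: "lor (comb k1 k2 k3 k4 k5) Y0 = -k2" "lor (comb k1 k2 k3 k4 k5) YS = -k1"
  "lor (comb k1 k2 k3 k4 k5) E1 = k3" "lor (comb k1 k2 k3 k4 k5) PS0 = k4" "lor (comb k1 k2 k3 k4 k5) P20 = k5"
  unfolding comb_def by (simp_all add: gram gram_sym algebra_simps)

lemma complete_comb: "v = comb (-lor v YS) (-lor v Y0) (lor v E1) (lor v PS0) (lor v P20)"
  unfolding comb_def by (rule complete)

lemma comb_inj: "comb k1 k2 k3 k4 k5 = comb l1 l2 l3 l4 l5 \<longleftrightarrow> k1 = l1 \<and> k2 = l2 \<and> k3 = l3 \<and> k4 = l4 \<and> k5 = l5"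
  by (metis lor_comb_base neg_equal_iff_equal)

lemma comb_add [simp]: "comb k1 k2 k3 k4 k5 + comb l1 l2 l3 l4 l5 = comb (k1+l1) (k2+l2) (k3+l3) (k4+l4) (k5+l5)"
  unfolding comb_def by (simp add: algebra_simps)
lemma comb_diff [simp]: "comb k1 k2 k3 k4 k5 - comb l1 l2 l3 l4 l5 = comb (k1-l1) (k2-l2) (k3-l3) (k4-l4) (k5-l5)"
  unfolding comb_def by (simp add: algebra_simps)
lemma comb_scale [simp]: "r *\<^sub>R comb k1 k2 k3 k4 k5 = comb (r*k1) (r*k2) (r*k3) (r*k4) (r*k5)"
  unfolding comb_def by (simp add: algebra_simps)
lemma comb_uminus [simp]: "- comb k1 k2 k3 k4 k5 = comb (-k1) (-k2) (-k3) (-k4) (-k5)"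
  unfolding comb_def by (simp add: algebra_simps)

lemma G_comb: "Gv (comb k1 k2 k3 k4 k5) = comb (k3*w - k4*(q*a) - k5*(b * s * ia)) k3
   (k1 + k2*w - k4*(b*c*ia * s) - k5*(a*c*q)) (-(k2*(q*a)) + k3*(b*c*ia * s) + k5*c)
   (-(k2*(b * s * ia)) + k3*(a*c*q) - k4*c)"
proof -
  have "Gv (comb k1 k2 k3 k4 k5) = k1 *\<^sub>R Gv Y0 + k2 *\<^sub>R Gv YS + k3 *\<^sub>R Gv E1 + k4 *\<^sub>R Gv PS0 + k5 *\<^sub>R Gv P20"
    unfolding comb_def by simp
  also have "\<dots> = k1 *\<^sub>R comb 0 0 1 0 0 + k2 *\<^sub>R comb 0 0 w (-(q*a)) (-(b * s * ia))
     + k3 *\<^sub>R comb w 1 0 (b*c*ia * s) (a*c*q) + k4 *\<^sub>R comb (-(q*a)) 0 (-(b*c*ia * s)) 0 (-c)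
     + k5 *\<^sub>R comb (-(b * s * ia)) 0 (-(a*c*q)) c 0"
    unfolding GY0 GYS GE1 GPS0 GP20 comb_def by (simp add: algebra_simps)
  finally show ?thesis by (simp add: comb_inj algebra_simps)
qed

end

locale geo = frame +
  fixes \<theta> :: real
  assumes ha: "a = cos \<theta>" and hb: "b = sin \<theta>" and hc: "c = sqrt (cos (2*\<theta>))"
    and hs: "s = sqrt (1 - (sin \<theta>)^2 * q^2)" and hia: "ia = inverse a"
begin

lemma defs_geo: "ca \<theta> = a" "cb \<theta> = b" "cc \<theta> = c" "sq \<theta> q = s" "cc \<theta> / ca \<theta> = c * ia" "cb \<theta> / ca \<theta> = b * ia"
  unfolding ca_def cb_def cc_def sq_def by (simp_all add: ha hb hc hs hia divide_inverse)

lemma div_ia: "x / a = x * ia" by (simp add: hia divide_inverse)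

lemma Yc: "Ycurve \<theta> = (\<lambda>u. Tmat u *v comb 1 0 0 0 0)"
  unfolding Ycurve_def inXi_def defs_geo comb_def Y0_def by simp

lemma PSf: "psiF \<theta> h q = (\<lambda>u. Tmat u *v comb h 0 0 1 0)"
  unfolding psiF_def Ycurve_def inXi_def defs_geo comb_def Y0_def PS0_def by (simp add: fun_eq_iff div_ia algebra_simps)

lemma P1f: "P1F \<theta> m = (\<lambda>u. Tmat u *v comb m 0 1 0 0)"
  unfolding P1F_def Ycurve_def inXi_def defs_geo comb_def Y0_def E1_def by (simp add: fun_eq_iff)

lemma P2f: "P2F \<theta> q p = (\<lambda>u. Tmat u *v comb p 0 0 0 1)"
  unfolding P2F_def Ycurve_def inXi_def defs_geo comb_def Y0_def P20_def by (simp add: fun_eq_iff)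

definition "tt h m p = (m^2+h^2+p^2)/2"
definition "YH h m p = comb (tt h m p) 1 m h p"
definition "R1 h m p = tt h m p + w - h*b*c*ia * s - p*a*c*q - m^2"
definition "R2 h m p = -(b * s * ia) + m*a*c*q - h*c - m*p"
definition "KK h m p = q*a + m*h - b*c*ia*m * s - p*c"

lemma vd: "vector_derivative (\<lambda>u. Tmat u *v x) (at u) = Tmat u *v Gv x"
  by (rule vector_derivative_at[OF T_deriv])

lemma exist:
  assumes K: "KK h m p = 0"
  shows "admissible \<theta> h m q p (\<lambda>u. Tmat u *v YH h m p) (\<lambda>_. m) (\<lambda>_. a*c*q - p)
     (\<lambda>_. (b*c*ia * s - h)/2) (\<lambda>_. -c/2) (\<lambda>_. R1 h m p) (\<lambda>_. R2 h m p)"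
proof -
  note K' = K[unfolded KK_def]
  have l1: "lor (YH h m p) (YH h m p) = 0"
    unfolding YH_def lor_comb tt_def by (simp add: algebra_simps power2_eq_square)
  have l2: "lor (YH h m p) (comb m 0 1 0 0) = 0" unfolding YH_def lor_comb by simp
  have l3: "lor (YH h m p) (comb p 0 0 0 1) = 0" unfolding YH_def lor_comb by simp
  have l4: "lor (YH h m p) (comb h 0 0 1 0) = 0" unfolding YH_def lor_comb by simp
  have l5: "lor (YH h m p) (Gv (comb h 0 0 1 0)) = 0" unfolding YH_def G_comb lor_comb
    using K' by (simp add: algebra_simps)
  have l6: "lor (YH h m p) (comb 1 0 0 0 0) = -1" unfolding YH_def lor_comb by simp
  have d1: "Gv (comb 1 0 0 0 0) = comb (-m*1 + m) (-m*0+0) (-m*0+1) (-m*0+0) (-m*0+0)"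
    unfolding G_comb comb_inj by simp
  have d2: "Gv (YH h m p) = comb (m*tt h m p + R1 h m p*m + R2 h m p * p) (m*1 + R1 h m p * 0 + R2 h m p * 0)
     (m*m + R1 h m p * 1 + R2 h m p * 0) (m*h + R1 h m p * 0 + R2 h m p * 0) (m*p + R1 h m p * 0 + R2 h m p * 1)"
    unfolding YH_def G_comb comb_inj R1_def R2_def tt_def
    by (intro conjI; ((simp add: algebra_simps power2_eq_square; fail) | (simp add: field_simps power2_eq_square; fail) | algebra | (insert K', algebra)))
  have d3: "Gv (comb m 0 1 0 0) = comb ((a*c*q - p)*p + (2*((b*c*ia * s - h)/2))*h + tt h m p + R1 h m p*1)
     ((a*c*q - p)*0 + (2*((b*c*ia * s - h)/2))*0 + 1 + R1 h m p*0)
     ((a*c*q - p)*0 + (2*((b*c*ia * s - h)/2))*0 + m + R1 h m p*0)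
     ((a*c*q - p)*0 + (2*((b*c*ia * s - h)/2))*1 + h + R1 h m p*0)
     ((a*c*q - p)*1 + (2*((b*c*ia * s - h)/2))*0 + p + R1 h m p*0)"
    unfolding YH_def G_comb comb_inj R1_def R2_def tt_def
    by (intro conjI; ((simp add: algebra_simps power2_eq_square; fail) | (simp add: field_simps power2_eq_square; fail) | algebra | (insert K', algebra)))
  have d4: "Gv (comb p 0 0 0 1) = comb (-(a*c*q - p)*m - (2*(-c/2))*h + R2 h m p * 1)
     (-(a*c*q - p)*0 - (2*(-c/2))*0 + R2 h m p * 0)
     (-(a*c*q - p)*1 - (2*(-c/2))*0 + R2 h m p * 0)
     (-(a*c*q - p)*0 - (2*(-c/2))*1 + R2 h m p * 0)
     (-(a*c*q - p)*0 - (2*(-c/2))*0 + R2 h m p * 0)"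
    unfolding G_comb comb_inj R1_def R2_def
    by (intro conjI; ((simp add: algebra_simps power2_eq_square; fail) | (simp add: field_simps power2_eq_square; fail) | algebra | (insert K', algebra)))
  have d5: "Gv (comb h 0 0 1 0) = comb (-(2*((b*c*ia * s - h)/2))*m + (2*(-c/2))*p)
     (-(2*((b*c*ia * s - h)/2))*0 + (2*(-c/2))*0)
     (-(2*((b*c*ia * s - h)/2))*1 + (2*(-c/2))*0)
     (-(2*((b*c*ia * s - h)/2))*0 + (2*(-c/2))*0)
     (-(2*((b*c*ia * s - h)/2))*0 + (2*(-c/2))*1)"
    unfolding G_comb comb_inj
    by (intro conjI; ((simp add: algebra_simps power2_eq_square; fail) | (simp add: field_simps power2_eq_square; fail) | algebra | (insert K', algebra)))
  show ?thesis
    unfolding admissible_def Yc PSf P1f P2f vd lor_T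
    apply (intro allI conjI)
    apply (rule l1) apply (rule l2) apply (rule l3) apply (rule l4) apply (rule l5) apply (rule l6)
    subgoal for u unfolding T_scale T_add T_diff T_uminus comb_scale comb_add comb_diff comb_uminus
      by (rule T_deriv_eq[OF d1])
    subgoal for u unfolding YH_def[symmetric] T_scale T_add T_diff T_uminus comb_scale comb_add comb_diff comb_uminus
      by (rule T_deriv_eq) (use d2 in \<open>simp add: YH_def\<close>)
    subgoal for u unfolding YH_def T_scale T_add T_diff T_uminus comb_scale comb_add comb_diff comb_uminus
      by (rule T_deriv_eq[OF d3[unfolded YH_def]])
    subgoal for u unfolding T_scale T_add T_diff T_uminus comb_scale comb_add comb_diff comb_uminus
      by (rule T_deriv_eq[OF d4])
    subgoal for u unfolding T_scale T_add T_diff T_uminus comb_scale comb_add comb_diff comb_uminus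
      by (rule T_deriv_eq[OF d5])
    done
qed


lemma uniq: "((\<lambda>u. Tmat u *v x) has_vector_derivative Tmat u *v y) (at u) \<Longrightarrow> Gv x = y"
  using vector_derivative_unique_at[OF T_deriv] T_inj by blast

lemma forward:
  assumes adm: "admissible \<theta> h m q p Yh \<mu>1 \<mu>2 k1 k2 \<rho>1 \<rho>2"
  shows "KK h m p = 0 \<and> (\<forall>u. Yh u = Tmat u *v YH h m p \<and> \<mu>1 u = m \<and> \<mu>2 u = a*c*q - p \<and>
     k1 u = (b*c*ia * s - h)/2 \<and> k2 u = -c/2 \<and> \<rho>1 u = R1 h m p \<and> \<rho>2 u = R2 h m p)"
proof -
  note A = adm[unfolded admissible_def Yc PSf P1f P2f vd, rule_format]
  have YhE: "Yh u = Tmat u *v YH h m p" for u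
  proof -
    define z where "z = Tmat (-u) *v Yh u"
    have Yz: "Yh u = Tmat u *v z" by (simp add: z_def T_inv)
    obtain x1 x2 x3 x4 x5 where zc: "z = comb x1 x2 x3 x4 x5" using complete_comb[of z] by blast
    note B = A[of u, unfolded Yz zc lor_T lor_comb]
    from B have e2: "x2 = 1" by simp
    from B e2 have e3: "x3 = m" and e4: "x4 = h" and e5: "x5 = p" by simp_all
    from B e2 e3 e4 e5 have "-(x1*1) - 1*x1 + m*m + h*h + p*p = 0" by simp
    then have e1: "x1 = tt h m p" unfolding tt_def by (simp add: power2_eq_square field_simps)
    show ?thesis unfolding Yz zc YH_def e1 e2 e3 e4 e5 ..
  qed
  have Yhf: "Yh = (\<lambda>u. Tmat u *v YH h m p)" using YhE by auto
  note C = A[unfolded Yhf lor_T]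
  have K: "KK h m p = 0"
    using C[of 0] unfolding YH_def G_comb lor_comb KK_def by (simp add: algebra_simps)
  note K' = K[unfolded KK_def]
  have "\<mu>1 u = m \<and> \<mu>2 u = a*c*q - p \<and>
     k1 u = (b*c*ia * s - h)/2 \<and> k2 u = -c/2 \<and> \<rho>1 u = R1 h m p \<and> \<rho>2 u = R2 h m p" for u
  proof -
    note D = C[of u, unfolded YH_def T_scale T_add T_diff T_uminus comb_scale comb_add comb_diff comb_uminus]
    have f1: "Gv (comb 1 0 0 0 0) = comb (- \<mu>1 u * 1 + m) (- \<mu>1 u * 0 + 0) (- \<mu>1 u * 0 + 1) (- \<mu>1 u * 0 + 0) (- \<mu>1 u * 0 + 0)"
      using D by (intro uniq) blast
    then have m1: "\<mu>1 u = m" unfolding G_comb comb_inj by simp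
    have f3: "Gv (comb m 0 1 0 0) = comb (\<mu>2 u * p + 2 * k1 u * h + tt h m p + \<rho>1 u * 1)
       (\<mu>2 u * 0 + 2 * k1 u * 0 + 1 + \<rho>1 u * 0) (\<mu>2 u * 0 + 2 * k1 u * 0 + m + \<rho>1 u * 0)
       (\<mu>2 u * 0 + 2 * k1 u * 1 + h + \<rho>1 u * 0) (\<mu>2 u * 1 + 2 * k1 u * 0 + p + \<rho>1 u * 0)"
      using D by (intro uniq) blast
    then have m2: "\<mu>2 u = a*c*q - p" and kk1: "k1 u = (b*c*ia * s - h)/2"
      unfolding G_comb comb_inj by (simp_all add: field_simps)
    have f4: "Gv (comb p 0 0 0 1) = comb (- \<mu>2 u * m - 2 * k2 u * h + \<rho>2 u * 1)
       (- \<mu>2 u * 0 - 2 * k2 u * 0 + \<rho>2 u * 0) (- \<mu>2 u * 1 - 2 * k2 u * 0 + \<rho>2 u * 0)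
       (- \<mu>2 u * 0 - 2 * k2 u * 1 + \<rho>2 u * 0) (- \<mu>2 u * 0 - 2 * k2 u * 0 + \<rho>2 u * 0)"
      using D by (intro uniq) blast
    then have kk2: "k2 u = -c/2"
      unfolding G_comb comb_inj by (simp add: field_simps)
    from f4 have r2: "\<rho>2 u = R2 h m p"
      unfolding G_comb comb_inj R2_def m2 kk2 by (simp add: field_simps)
    have f2: "Gv (comb (tt h m p) 1 m h p) = comb (\<mu>1 u * tt h m p + \<rho>1 u * m + \<rho>2 u * p)
       (\<mu>1 u * 1 + \<rho>1 u * 0 + \<rho>2 u * 0) (\<mu>1 u * m + \<rho>1 u * 1 + \<rho>2 u * 0)
       (\<mu>1 u * h + \<rho>1 u * 0 + \<rho>2 u * 0) (\<mu>1 u * p + \<rho>1 u * 0 + \<rho>2 u * 1)"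
      using D by (intro uniq) blast
    then have r1: "\<rho>1 u = R1 h m p"
      unfolding G_comb comb_inj R1_def m1 by (simp add: field_simps power2_eq_square)
    show ?thesis using m1 m2 kk1 kk2 r1 r2 by blast
  qed
  then show ?thesis using K YhE by blast
qed


lemma a_nz: "a \<noteq> 0" using ia by auto
lemma ia_eq: "ia = 1/a" using ia a_nz by (simp add: field_simps)

lemma F_k1: "(b*c*ia * s - h)/2 = b*c* s/(2*a) - h/2"
  using a_nz unfolding ia_eq by (simp add: field_simps)

lemma F_r2: "R2 h m p = (a^2*c*m*q - a*c*h - a*m*p - b* s)/a"
  unfolding R2_def using a_nz by (simp add: ia_eq field_simps power2_eq_square)

lemma F_r1: "R1 h m p = (a^2*h^2 - 2*a*b*c*h* s + a^2*p^2 + c^4*q^2 - 2*a^3*c*p*q - a^2*m^2 + c^2)/(2*a^2)"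
proof -
  have e: "c^2*q^2 - c^2*q^2*ia^2/2 = c^4*q^2*ia^2/2"
  proof -
    have "1 + c^2 = 2*a^2" using ab cc by simp
    then have "c^2*q^2*ia^2*(1 + c^2) = c^2*q^2*(2*(a*ia)^2)" by (simp add: power_mult_distrib)
    then have "c^2*q^2*ia^2 + c^2*q^2*ia^2*c^2 = 2*c^2*q^2" using ia by (simp add: algebra_simps)
    then show ?thesis by (simp add: field_simps power2_eq_square power4_eq_xxxx)
  qed
  have "R1 h m p = (m^2+h^2+p^2)/2 + c^2*ia^2/2 + c^4*q^2*ia^2/2 - h*b*c*ia * s - p*a*c*q - m^2"
    unfolding R1_def tt_def w_def using e by (simp add: algebra_simps)
  also have "\<dots> = (a^2*h^2 - 2*a*b*c*h* s + a^2*p^2 + c^4*q^2 - 2*a^3*c*p*q - a^2*m^2 + c^2)/(2*a^2)"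
    using a_nz unfolding ia_eq by (simp add: field_simps power2_eq_square power3_eq_cube)
  finally show ?thesis .
qed

lemma F_p: "c \<noteq> 0 \<Longrightarrow> KK h m p = 0 \<longleftrightarrow> p = (a*m*h + a^2*q - b*c*m* s)/(a*c)"
  unfolding KK_def using a_nz by (auto simp: ia_eq field_simps power2_eq_square)

end


theorem mainTheorem8:
  fixes \<theta> :: real
  assumes "0 \<le> \<theta>" and "\<theta> \<le> pi / 4"
  shows
   "let a = cos \<theta>; b = sin \<theta>; c = sqrt (cos (2 * \<theta>)) in
    (\<forall>h m q p Yh \<mu>1 \<mu>2 k1 k2 \<rho>1 \<rho>2.
       \<bar>q\<bar> * \<bar>b\<bar> \<le> 1 \<and> admissible \<theta> h m q p Yh \<mu>1 \<mu>2 k1 k2 \<rho>1 \<rho>2 \<longrightarrow>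
       (c \<noteq> 0 \<longrightarrow>
          \<theta> < pi / 4 \<and>
          p = (a * m * h + a^2 * q - b * c * m * sqrt (1 - b^2 * q^2)) / (a * c) \<and>
          (\<forall>u. \<mu>1 u = m \<and> \<mu>2 u = a * c * q - p \<and>
               k1 u = b * c * sqrt (1 - b^2 * q^2) / (2 * a) - h / 2 \<and>
               k2 u = - c / 2 \<and>
               \<rho>1 u = (a^2 * h^2 - 2 * a * b * c * h * sqrt (1 - q^2 * b^2) + a^2 * p^2
                        + c^4 * q^2 - 2 * a^3 * c * p * q - a^2 * m^2 + c^2) / (2 * a^2) \<and>
               \<rho>2 u = (a^2 * c * m * q - a * c * h - a * m * p - b * sqrt (1 - q^2 * b^2)) / a)) \<and>
       (c = 0 \<longrightarrow>
          \<bar>h * m\<bar> \<le> 1 \<and>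
          (\<forall>u. \<mu>1 u = m \<and> \<mu>2 u = - p \<and> k1 u = - h / 2 \<and> k2 u = 0 \<and>
               \<rho>1 u = (h^2 + p^2 - m^2) / 2 \<and>
               \<rho>2 u = - p * m - sqrt (1 - h^2 * m^2))))
    \<and>
    (c \<noteq> 0 \<longrightarrow>
       (\<forall>h m q. \<bar>q\<bar> * \<bar>b\<bar> \<le> 1 \<longrightarrow>
          (let p = (a * m * h + a^2 * q - b * c * m * sqrt (1 - b^2 * q^2)) / (a * c) in
           \<exists>Yh. admissible \<theta> h m q p Yh
                  (\<lambda>_. m) (\<lambda>_. a * c * q - p)
                  (\<lambda>_. b * c * sqrt (1 - b^2 * q^2) / (2 * a) - h / 2) (\<lambda>_. - c / 2)
                  (\<lambda>_. (a^2 * h^2 - 2 * a * b * c * h * sqrt (1 - q^2 * b^2) + a^2 * p^2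
                        + c^4 * q^2 - 2 * a^3 * c * p * q - a^2 * m^2 + c^2) / (2 * a^2))
                  (\<lambda>_. (a^2 * c * m * q - a * c * h - a * m * p - b * sqrt (1 - q^2 * b^2)) / a))))
    \<and>
    (c = 0 \<longrightarrow>
       (\<forall>h m p. \<bar>h * m\<bar> \<le> 1 \<longrightarrow>
          (\<exists>q Yh. \<bar>q\<bar> * \<bar>b\<bar> \<le> 1 \<and>
             admissible \<theta> h m q p Yh
               (\<lambda>_. m) (\<lambda>_. - p) (\<lambda>_. - h / 2) (\<lambda>_. 0)
               (\<lambda>_. (h^2 + p^2 - m^2) / 2) (\<lambda>_. - p * m - sqrt (1 - h^2 * m^2)))))"
proof -
  define a where "a = cos \<theta>"
  define b where "b = sin \<theta>"
  define c where "c = sqrt (cos (2 * \<theta>))"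
  have a_pos: "a > 0" unfolding a_def using assms pi_gt_zero by (intro cos_gt_zero_pi) linarith+
  have b_nn: "b \<ge> 0" unfolding b_def using assms pi_gt_zero by (intro sin_ge_zero) linarith+
  have cos2: "cos (2*\<theta>) \<ge> 0" using assms pi_gt_zero by (intro cos_ge_zero) linarith+
  have ab: "a^2 + b^2 = 1" unfolding a_def b_def by simp
  have cc: "c^2 = a^2 - b^2" unfolding c_def a_def b_def using cos2 by (simp add: cos_double)
  have c_nn: "c \<ge> 0" unfolding c_def using cos2 by simp
  have ia1: "a * inverse a = 1" using a_pos by simp
  have G: "geo a b c (sqrt (1 - b^2*q^2)) q (inverse a) \<theta>" if q1: "\<bar>q\<bar> * \<bar>b\<bar> \<le> 1" for q
  proof -
    have "(\<bar>q\<bar> * \<bar>b\<bar>)^2 \<le> 1^2" using q1 by (intro power_mono) auto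
    then have "b^2*q^2 \<le> 1" by (simp add: power_mult_distrib mult.commute)
    then have ss: "(sqrt (1 - b^2*q^2))^2 = 1 - b^2*q^2" by simp
    show ?thesis
      apply unfold_locales
      apply (rule ia1) apply (rule ab) apply (rule cc) apply (rule ss) apply (rule a_def) apply (rule b_def)
      apply (rule c_def) apply (simp add: b_def) apply (rule refl) done
  qed
  have ab_eq: "a = b" if "c = 0"
  proof -
    have "a^2 = b^2" using cc that by simp
    then show ?thesis using a_pos b_nn by simp
  qed
  have th_lt: "\<theta> < pi/4" if "c \<noteq> 0"
  proof (rule ccontr)
    assume "\<not> \<theta> < pi/4"
    then have "\<theta> = pi/4" using assms by simp
    then have "2*\<theta> = pi/2" by simp
    then have "cos (2*\<theta>) = 0" by (metis cos_pi_half)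
    then have "c = 0" unfolding c_def by simp
    then show False using that by simp
  qed
  show ?thesis
    unfolding Let_def a_def[symmetric] b_def[symmetric] c_def[symmetric]
    apply (intro conjI)
    subgoal
      apply (intro allI impI)
      subgoal premises H for h m q p Yh \<mu>1 \<mu>2 k1 k2 \<rho>1 \<rho>2
      proof -
        have q1: "\<bar>q\<bar> * \<bar>b\<bar> \<le> 1" and adm: "admissible \<theta> h m q p Yh \<mu>1 \<mu>2 k1 k2 \<rho>1 \<rho>2"
          using H by auto
        define s where "s = sqrt (1 - b^2*q^2)"
        interpret g: geo a b c s q "inverse a" \<theta> unfolding s_def by (rule G[OF q1])
        have sq2: "sqrt (1 - q^2*b^2) = s" unfolding s_def by (simp add: mult.commute)
        have FW: "g.KK h m p = 0 \<and> (\<forall>u. Yh u = Tmat u *v g.YH h m p \<and> \<mu>1 u = m \<and> \<mu>2 u = a*c*q - p \<and>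
           k1 u = (b*c*inverse a * s - h)/2 \<and> k2 u = -c/2 \<and> \<rho>1 u = g.R1 h m p \<and> \<rho>2 u = g.R2 h m p)"
          by (rule g.forward[OF adm])
        then have K: "g.KK h m p = 0" and F: "\<And>u. \<mu>1 u = m \<and> \<mu>2 u = a*c*q - p \<and>
           k1 u = (b*c*inverse a * s - h)/2 \<and> k2 u = -c/2 \<and> \<rho>1 u = g.R1 h m p \<and> \<rho>2 u = g.R2 h m p"
          by auto
        have c0facts: "\<bar>h*m\<bar> \<le> 1 \<and> g.R1 h m p = (h^2+p^2-m^2)/2 \<and> g.R2 h m p = - p * m - sqrt (1 - h^2 * m^2)"
          if c0: "c = 0"
        proof -
          have ba: "b = a" using ab_eq[OF c0] by simp
          have qa: "q*a = -(m*h)" using K c0 unfolding g.KK_def by simp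
          have hm: "\<bar>h*m\<bar> = \<bar>q\<bar> * \<bar>b\<bar>"
          proof -
            have "\<bar>h*m\<bar> = \<bar>q*a\<bar>" using qa by (simp add: mult.commute)
            also have "\<dots> = \<bar>q\<bar> * \<bar>b\<bar>" using ba by (simp add: abs_mult)
            finally show ?thesis .
          qed
          have "b^2*q^2 = h^2*m^2" using qa ba by (metis power_mult_distrib mult.commute minus_mult_right power2_minus)
          then have sh: "s = sqrt (1 - h^2*m^2)" unfolding s_def by simp
          have r1: "g.R1 h m p = (h^2+p^2-m^2)/2" unfolding g.R1_def g.tt_def g.w_def using c0 by (simp add: field_simps)
          have r2: "g.R2 h m p = - p * m - sqrt (1 - h^2 * m^2)"
            unfolding g.R2_def sh[symmetric] using c0 ba ia1 by (simp add: algebra_simps)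
          show ?thesis using hm q1 r1 r2 by simp
        qed
        show ?thesis
          unfolding s_def[symmetric] sq2
          apply (intro conjI impI)
          subgoal using th_lt by blast
          subgoal using K g.F_p by blast
          subgoal using F g.F_k1 g.F_r1 g.F_r2 by auto
          subgoal using c0facts by blast
          subgoal using F c0facts by auto
          done
      qed
      done
    subgoal
      apply (intro allI impI)
      subgoal premises H for h m q
      proof -
        have c0: "c \<noteq> 0" and q1: "\<bar>q\<bar> * \<bar>b\<bar> \<le> 1" using H by auto
        define s where "s = sqrt (1 - b^2*q^2)"
        interpret g: geo a b c s q "inverse a" \<theta> unfolding s_def by (rule G[OF q1])
        have sq2: "sqrt (1 - q^2*b^2) = s" unfolding s_def by (simp add: mult.commute)
        define p where "p = (a * m * h + a^2 * q - b * c * m * s) / (a * c)"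
        have K: "g.KK h m p = 0" using g.F_p[OF c0] p_def by blast
        note E = g.exist[OF K, unfolded g.F_k1 g.F_r1 g.F_r2]
        show ?thesis
          unfolding s_def[symmetric] sq2 p_def[symmetric] using E by blast
      qed
      done
    subgoal
      apply (intro allI impI)
      subgoal premises H for h m p
      proof -
        have c0: "c = 0" and hm: "\<bar>h*m\<bar> \<le> 1" using H by auto
        have ba: "b = a" using ab_eq[OF c0] by simp
        define q where "q = -(m*h) * inverse a"
        have qa: "q*a = -(m*h)" unfolding q_def using ia1 by (simp add: algebra_simps)
        have q1: "\<bar>q\<bar> * \<bar>b\<bar> \<le> 1"
        proof -
          have "\<bar>q\<bar> * \<bar>b\<bar> = \<bar>q*a\<bar>" using ba by (simp add: abs_mult)
          also have "\<dots> = \<bar>h*m\<bar>" using qa by (simp add: mult.commute)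
          finally show ?thesis using hm by simp
        qed
        define s where "s = sqrt (1 - b^2*q^2)"
        interpret g: geo a b c s q "inverse a" \<theta> unfolding s_def by (rule G[OF q1])
        have K: "g.KK h m p = 0" unfolding g.KK_def using c0 qa by simp
        have "b^2*q^2 = h^2*m^2" using qa ba by (metis power_mult_distrib mult.commute minus_mult_right power2_minus)
        then have sh: "s = sqrt (1 - h^2*m^2)" unfolding s_def by simp
        have r1: "g.R1 h m p = (h^2+p^2-m^2)/2" unfolding g.R1_def g.tt_def g.w_def using c0 by (simp add: field_simps)
        have r2: "g.R2 h m p = - p * m - sqrt (1 - h^2 * m^2)"
          unfolding g.R2_def sh[symmetric] using c0 ba ia1 by (simp add: algebra_simps)
        note E = g.exist[OF K, unfolded r1 r2]
        have E': "admissible \<theta> h m q p (\<lambda>u. Tmat u *v g.YH h m p) (\<lambda>_. m) (\<lambda>_. - p) (\<lambda>_. - h / 2) (\<lambda>_. 0)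
               (\<lambda>_. (h^2 + p^2 - m^2) / 2) (\<lambda>_. - p * m - sqrt (1 - h^2 * m^2))"
          using E by (simp add: c0)
        show ?thesis using E' q1 by blast
      qed
      done
    done
qed


end
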